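(* Let $r$ be a positive integer such that $r+1$ is prime, and let $k$ be a positive integer with $r+1\nmid k$ such that $(r+1)^{\alpha}k\in G_r$ for all nonnegative integers $\alpha$. If $k_1,k_2$ are relatively prime positive integers with $k_1k_2=k$, then either $(r+1)^{\alpha}k_1\in G_r$ for all nonnegative integers $\alpha$, or $(r+1)^{\alpha}k_2\in G_r$ for all nonnegative integers $\alpha$.
   Context: For a positive integer $r$, the $r$-th Schemmel totient function $S_r:\mathbb{N}\to\mathbb{N}_0$ is the multiplicative arithmetic function (so $S_r(1)=1$ and $S_r(ab)=S_r(a)S_r(b)$ for coprime $a,b$) defined on prime powers by $S_r(p^{\alpha})=0$ if $p\le r$ and $S_r(p^\alpha)=p^{\alpha-1}(p-r)$ if $p>r$, for all primes $p$ and positive integers $\alpha$. $G_r$ denotes the set of positive integers not in the range of $S_r$. *)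

theory Defs
  imports "HOL-Computational_Algebra.Primes"
begin

text \<open>Only meaningful for n > 0.\<close>
definition schemmel :: "nat \<Rightarrow> nat \<Rightarrow> nat" where
  "schemmel r n = (\<Prod>p\<in>prime_factors n.
      (if p \<le> r then 0 else p ^ (multiplicity p n - 1) * (p - r)))"

definition G :: "nat \<Rightarrow> nat set" where
  "G r = {m. m > 0 \<and> m \<notin> schemmel r ` {n. n > 0}}"

end

theory Submission
  imports Defs
begin

definition hh :: "nat \<Rightarrow> nat \<Rightarrow> nat \<Rightarrow> nat" where
  "hh r p e = (if e = 0 then 1 else if p \<le> r then 0 else p ^ (e - 1) * (p - r))"

lemma schemmel_U:
  assumes "finite U" "prime_factors n \<subseteq> U" "\<forall>p\<in>U. prime p" "n > 0"
  shows "schemmel r n = (\<Prod>p\<in>U. hh r p (multiplicity p n))"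
proof -
  have "schemmel r n = (\<Prod>p\<in>prime_factors n. hh r p (multiplicity p n))"
    unfolding schemmel_def
    by (rule prod.cong) (auto simp: hh_def prime_factors_multiplicity)
  also have "\<dots> = (\<Prod>p\<in>U. hh r p (multiplicity p n))"
  proof (rule prod.mono_neutral_left[OF assms(1,2)])
    show "\<forall>i\<in>U - prime_factors n. hh r i (multiplicity i n) = 1"
      using assms(3) by (auto simp: hh_def prime_factors_multiplicity)
  qed
  finally show ?thesis .
qed

lemma schemmel_lcm_gcd:
  assumes "m > 0" "n > 0"
  shows "schemmel r (lcm m n) * schemmel r (gcd m n) = schemmel r m * schemmel r n"
proof -
  let ?U = "prime_factors m \<union> prime_factors n"
  have fU: "finite ?U" by simp
  have pU: "\<forall>p\<in>?U. prime p" by auto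
  have l0: "lcm m n > 0" using assms by (simp add: lcm_pos_nat)
  have g0: "gcd m n > 0" using assms by simp
  have e1: "schemmel r (lcm m n) = (\<Prod>p\<in>?U. hh r p (multiplicity p (lcm m n)))"
    by (rule schemmel_U[OF fU _ pU l0]) (use assms in auto)
  have e2: "schemmel r (gcd m n) = (\<Prod>p\<in>?U. hh r p (multiplicity p (gcd m n)))"
    by (rule schemmel_U[OF fU _ pU g0]) (use assms in auto)
  have e3: "schemmel r m = (\<Prod>p\<in>?U. hh r p (multiplicity p m))"
    by (rule schemmel_U[OF fU _ pU]) (use assms in auto)
  have e4: "schemmel r n = (\<Prod>p\<in>?U. hh r p (multiplicity p n))"
    by (rule schemmel_U[OF fU _ pU]) (use assms in auto)
  have "schemmel r (lcm m n) * schemmel r (gcd m n)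
      = (\<Prod>p\<in>?U. hh r p (multiplicity p (lcm m n)) * hh r p (multiplicity p (gcd m n)))"
    unfolding e1 e2 by (simp add: prod.distrib)
  also have "\<dots> = (\<Prod>p\<in>?U. hh r p (multiplicity p m) * hh r p (multiplicity p n))"
  proof (rule prod.cong)
    fix p assume "p \<in> ?U"
    then have "prime p" by auto
    then show "hh r p (multiplicity p (lcm m n)) * hh r p (multiplicity p (gcd m n)) =
      hh r p (multiplicity p m) * hh r p (multiplicity p n)"
      using assms by (simp add: multiplicity_lcm multiplicity_gcd max_def min_def)
  qed simp
  also have "\<dots> = schemmel r m * schemmel r n"
    unfolding e3 e4 by (simp add: prod.distrib)
  finally show ?thesis .
qed

lemma hh_dvd:
  assumes "e \<le> f" shows "hh r p e dvd hh r p f"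
  using assms by (auto simp: hh_def intro!: mult_dvd_mono le_imp_power_dvd)

lemma schemmel_dvd:
  assumes "d dvd m" "m > 0"
  shows "schemmel r d dvd schemmel r m"
proof -
  have d0: "d > 0" using assms by (auto intro: Nat.gr0I)
  have pf: "prime_factors d \<subseteq> prime_factors m"
    using assms d0 by (auto simp: prime_factors_dvd intro: dvd_trans)
  have "schemmel r d = (\<Prod>p\<in>prime_factors m. hh r p (multiplicity p d))"
    by (rule schemmel_U) (use pf d0 in auto)
  moreover have "schemmel r m = (\<Prod>p\<in>prime_factors m. hh r p (multiplicity p m))"
    by (rule schemmel_U) (use assms in auto)
  moreover have "(\<Prod>p\<in>prime_factors m. hh r p (multiplicity p d)) dvd
      (\<Prod>p\<in>prime_factors m. hh r p (multiplicity p m))"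
    by (rule prod_dvd_prod, rule hh_dvd, rule dvd_imp_multiplicity_le) (use assms in auto)
  ultimately show ?thesis by simp
qed

theorem theorem2p3:
  fixes r k k1 k2 :: nat
  assumes "r > 0" and "prime (r + 1)"
    and "k > 0" and "\<not> (r + 1) dvd k"
    and "\<forall>\<alpha>::nat. (r + 1) ^ \<alpha> * k \<in> G r"
    and "k1 > 0" and "k2 > 0" and "coprime k1 k2" and "k1 * k2 = k"
  shows "(\<forall>\<alpha>::nat. (r + 1) ^ \<alpha> * k1 \<in> G r) \<or> (\<forall>\<alpha>::nat. (r + 1) ^ \<alpha> * k2 \<in> G r)"
proof (rule ccontr)
  let ?p = "r + 1"
  assume "\<not> ?thesis"
  then obtain a1 a2 where A1: "?p ^ a1 * k1 \<notin> G r" and A2: "?p ^ a2 * k2 \<notin> G r" by blast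
  have "?p ^ a1 * k1 > 0" using assms by simp
  with A1 obtain n1 where n1: "n1 > 0" "schemmel r n1 = ?p ^ a1 * k1" unfolding G_def by auto
  have "?p ^ a2 * k2 > 0" using assms by simp
  with A2 obtain n2 where n2: "n2 > 0" "schemmel r n2 = ?p ^ a2 * k2" unfolding G_def by auto
  define N where "N = lcm n1 n2"
  define g where "g = gcd n1 n2"
  have N0: "N > 0" using n1 n2 by (simp add: N_def lcm_pos_nat)
  have key: "schemmel r N * schemmel r g = ?p ^ (a1 + a2) * k"
    using schemmel_lcm_gcd[OF n1(1) n2(1), of r] n1 n2 assms(9)
    by (simp add: N_def g_def power_add algebra_simps)
  have d1: "schemmel r g dvd ?p ^ a1 * k1"
    using schemmel_dvd[of g n1 r] n1 by (simp add: g_def)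
  have d2: "schemmel r g dvd ?p ^ a2 * k2"
    using schemmel_dvd[of g n2 r] n2 by (simp add: g_def)
  define d where "d = gcd (schemmel r g) k"
  have dk: "d dvd k" by (simp add: d_def)
  have cp: "coprime d (?p ^ a)" for a
  proof -
    have "coprime d ?p"
    proof (rule ccontr)
      assume "\<not> coprime d ?p"
      then have "?p dvd d" using assms(2) prime_imp_coprime coprime_commute by blast
      then show False using dk assms(4) by (meson dvd_trans)
    qed
    then show ?thesis by simp
  qed
  have "d dvd ?p ^ a1 * k1" using d1 unfolding d_def using gcd_dvd1 dvd_trans by blast
  then have dk1: "d dvd k1" using cp coprime_dvd_mult_right_iff by blast
  have "d dvd ?p ^ a2 * k2" using d2 unfolding d_def using gcd_dvd1 dvd_trans by blast
  then have dk2: "d dvd k2" using cp coprime_dvd_mult_right_iff by blast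
  have "is_unit d" using dk1 dk2 assms(8) coprime_common_divisor by blast
  then have cg: "coprime (schemmel r g) k" using is_unit_gcd unfolding d_def by blast
  have "k dvd schemmel r N * schemmel r g" using key by simp
  then have "k dvd schemmel r N" using cg coprime_commute coprime_dvd_mult_left_iff by blast
  then obtain t where t: "schemmel r N = k * t" by blast
  have "k * (t * schemmel r g) = k * ?p ^ (a1 + a2)" using key t by (simp add: algebra_simps)
  then have "t * schemmel r g = ?p ^ (a1 + a2)" using assms(3) by simp
  then have "t dvd ?p ^ (a1 + a2)" by (metis dvd_triv_left)
  then obtain i where "t = ?p ^ i" using divides_primepow_nat[OF assms(2)] by blast
  then have "schemmel r N = ?p ^ i * k" using t by simp
  moreover have "?p ^ i * k \<in> G r" using assms(5) by blast
  ultimately show False using N0 unfolding G_def by (metis (mono_tags, lifting) image_eqI mem_Collect_eq)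
qed

end
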